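(* Let $I_n$ denote the number of inversion sequences of length $n$ avoiding all of the patterns $100$, $102$, $201$, $210$ (with $I_0=1$). Then $$\sum_{n\ge0} I_n z^n=\frac{(1-4z)(1-2z)(3-2z)-(1-8z+12z^2-2z^3)\sqrt{1-4z}}{2(1-z)^2(1-4z)} = 1+z+2z^2+6z^3+21z^4+76z^5+\cdots.$$
   Context: An inversion sequence of length $n$ is an integer sequence $(a_1,\dots,a_n)$ with $0\le a_i<i$ for all $i$. A pattern is a sequence $\sigma$ of non-negative integers containing every value from $0$ to $\max(\sigma)$; the reduction of a sequence replaces its smallest values by $0$, the next smallest by $1$, etc. A sequence $a$ contains $\sigma$ if some (not necessarily consecutive) subsequence of $a$ has reduction $\sigma$; otherwise $a$ avoids $\sigma$. Equivalently, these are the inversion sequences with no $i<j<k$ such that $a_i>a_j$ and $a_i\ne a_k$. The square root is the power series with constant term $1$. *)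

theory Defs
  imports Complex_Main "HOL-Library.Sublist" "HOL-Computational_Algebra.Formal_Power_Series"
begin

text \<open>Inversion sequences of length n, as 0-indexed lists: entry at position i
  (the paper's a_{i+1}) satisfies 0 \<le> a < i+1.\<close>
definition inv_seq :: "nat \<Rightarrow> nat list \<Rightarrow> bool" where
  "inv_seq n a \<longleftrightarrow> length a = n \<and> (\<forall>i<n. a ! i \<le> i)"

definition reduction :: "nat list \<Rightarrow> nat list" where
  "reduction xs = map (\<lambda>x. card {y \<in> set xs. y < x}) xs"

definition contains_pat :: "nat list \<Rightarrow> nat list \<Rightarrow> bool" where
  "contains_pat a \<sigma> \<longleftrightarrow> (\<exists>ys. subseq ys a \<and> reduction ys = \<sigma>)"

definition avoids_pat :: "nat list \<Rightarrow> nat list \<Rightarrow> bool" where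
  "avoids_pat a \<sigma> \<longleftrightarrow> \<not> contains_pat a \<sigma>"

definition I_count :: "nat \<Rightarrow> nat" where
  "I_count n = card {a. inv_seq n a \<and> avoids_pat a [1,0,0] \<and> avoids_pat a [1,0,2]
                        \<and> avoids_pat a [2,0,1] \<and> avoids_pat a [2,1,0]}"

end

theory Submission
  imports Defs
begin


lemma red3: "reduction [x,y,z] = [card {w\<in>{x,y,z}. w<x}, card {w\<in>{x,y,z}. w<y}, card {w\<in>{x,y,z}. w<z}]"
  by (simp add: reduction_def)

lemma pats: "(reduction [x,y,z] = [1,0,0] \<or> reduction [x,y,z] = [1,0,2] \<or> reduction [x,y,z] = [2,0,1] \<or> reduction [x,y,z] = [2,1,0]) \<longleftrightarrow> (y < x \<and> x \<noteq> (z::nat))"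
proof -
  have c: "{w\<in>{x,y,z}. w<t} = (if x < t then {x} else {}) \<union> (if y < t then {y} else {}) \<union> (if z < t then {z} else {})" for t
    by auto
  show ?thesis unfolding red3 c
    by (cases x y rule: linorder_cases; cases x z rule: linorder_cases; cases y z rule: linorder_cases) (auto simp: card_insert_if)
qed

lemma subseq_Cons_idx:
  "subseq (x#xs) ys \<longleftrightarrow> (\<exists>i<length ys. ys!i = x \<and> subseq xs (drop (Suc i) ys))"
proof (induction ys)
  case Nil
  then show ?case by simp
next
  case (Cons y ys)
  have "subseq (x#xs) (y#ys) \<longleftrightarrow> (x = y \<and> subseq xs ys) \<or> subseq (x#xs) ys"
    by (cases "x = y") (auto intro: subseq_Cons')
  also have "\<dots> \<longleftrightarrow> (\<exists>i<length (y#ys). (y#ys)!i = x \<and> subseq xs (drop (Suc i) (y#ys)))"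
  proof
    assume "(x = y \<and> subseq xs ys) \<or> subseq (x#xs) ys"
    then show "\<exists>i<length (y#ys). (y#ys)!i = x \<and> subseq xs (drop (Suc i) (y#ys))"
    proof
      assume "x = y \<and> subseq xs ys" thus ?thesis by (intro exI[of _ 0]) simp
    next
      assume "subseq (x#xs) ys"
      then obtain i where "i<length ys" "ys!i = x" "subseq xs (drop (Suc i) ys)" using Cons.IH by blast
      thus ?thesis by (intro exI[of _ "Suc i"]) simp
    qed
  next
    assume "\<exists>i<length (y#ys). (y#ys)!i = x \<and> subseq xs (drop (Suc i) (y#ys))"
    then obtain i where i: "i<length (y#ys)" "(y#ys)!i = x" "subseq xs (drop (Suc i) (y#ys))" by blast
    show "(x = y \<and> subseq xs ys) \<or> subseq (x#xs) ys"
    proof (cases i)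
      case 0 thus ?thesis using i by simp
    next
      case (Suc i')
      hence "i' < length ys" "ys!i' = x" "subseq xs (drop (Suc i') ys)" using i by auto
      hence "subseq (x#xs) ys" using Cons.IH by blast
      thus ?thesis by blast
    qed
  qed
  finally show ?case .
qed

lemma subseq3: "subseq [x,y,z] a \<longleftrightarrow> (\<exists>i j k. i<j \<and> j<k \<and> k<length a \<and> a!i = x \<and> a!j = y \<and> a!k = z)"
proof
  assume "subseq [x,y,z] a"
  then obtain i where i: "i < length a" "a!i = x" "subseq [y,z] (drop (Suc i) a)"
    unfolding subseq_Cons_idx[of x "[y,z]" a] by blast
  then obtain j where j: "j < length (drop (Suc i) a)" "(drop (Suc i) a)!j = y" "subseq [z] (drop (Suc j) (drop (Suc i) a))"
    unfolding subseq_Cons_idx[of y "[z]"] by blast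
  then obtain k where k: "k < length (drop (Suc j) (drop (Suc i) a))" "(drop (Suc j) (drop (Suc i) a))!k = z"
    unfolding subseq_Cons_idx[of z "[]"] by blast
  have "i < Suc i + j" "Suc i + j < Suc (Suc i + j) + k" "Suc (Suc i + j) + k < length a"
    "a!i = x" "a!(Suc i + j) = y" "a!(Suc (Suc i + j) + k) = z"
    using i j k by (simp_all add: add.commute add.left_commute)
  thus "\<exists>i j k. i<j \<and> j<k \<and> k<length a \<and> a!i = x \<and> a!j = y \<and> a!k = z" by blast
next
  assume "\<exists>i j k. i<j \<and> j<k \<and> k<length a \<and> a!i = x \<and> a!j = y \<and> a!k = z"
  then obtain i j k where h: "i<j" "j<k" "k<length a" "a!i = x" "a!j = y" "a!k = z" by blast
  have "(drop (Suc j) a) ! (k - Suc j) = z" "k - Suc j < length (drop (Suc j) a)" using h by auto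
  hence "subseq [z] (drop (Suc j) a)"
    by (metis subseq_singleton_left nth_mem)
  moreover have "(drop (Suc i) a) ! (j - Suc i) = y" "j - Suc i < length (drop (Suc i) a)"
    "drop (Suc (j - Suc i)) (drop (Suc i) a) = drop (Suc j) a" using h by auto
  ultimately have "subseq [y,z] (drop (Suc i) a)"
    unfolding subseq_Cons_idx[of y] by metis
  moreover have "drop (Suc i) a = drop (Suc i) a" ..
  ultimately show "subseq [x,y,z] a"
    unfolding subseq_Cons_idx[of x] using h(1,2,3,4) by (metis order.strict_trans)
qed

definition bad :: "nat list \<Rightarrow> bool" where
  "bad a \<longleftrightarrow> (\<exists>i j k. i<j \<and> j<k \<and> k<length a \<and> a!i > a!j \<and> a!i \<noteq> a!k)"

lemma len3: "length ys = 3 \<Longrightarrow> \<exists>x y z. ys = [x,y,z]"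
  by (cases ys; cases "tl ys"; cases "tl (tl ys)") auto

lemma R: "(\<exists>ys. subseq ys a \<and> P (reduction ys)) \<longleftrightarrow> (\<exists>x y z. subseq [x,y,z] a \<and> P (reduction [x,y,z]))"
  if "\<And>r. P r \<Longrightarrow> length r = 3"
proof
    assume "\<exists>ys. subseq ys a \<and> P (reduction ys)"
    then obtain ys where ys: "subseq ys a" "P (reduction ys)" by blast
    have "length (reduction ys) = 3" using ys(2) that by blast
    hence "length ys = 3" by (simp add: reduction_def)
    then obtain x y z where "ys = [x,y,z]" using len3 by blast
    thus "\<exists>x y z. subseq [x,y,z] a \<and> P (reduction [x,y,z])" using ys by blast
next
    assume "\<exists>x y z. subseq [x,y,z] a \<and> P (reduction [x,y,z])"
    thus "\<exists>ys. subseq ys a \<and> P (reduction ys)" by blast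
qed

lemma B: "(\<exists>x y z. subseq [x,y,z] a \<and> (y < x \<and> x \<noteq> z)) \<longleftrightarrow> bad a"
proof
  assume "\<exists>x y z. subseq [x,y,z] a \<and> (y < x \<and> x \<noteq> z)"
  then obtain x y z where "subseq [x,y,z] a" "y < x" "x \<noteq> z" by blast
  then obtain i j k where "i<j" "j<k" "k<length a" "a!i = x" "a!j = y" "a!k = z"
    unfolding subseq3 by blast
  thus "bad a" unfolding bad_def using \<open>y<x\<close> \<open>x\<noteq>z\<close> by blast
next
  assume "bad a"
  then obtain i j k where h: "i<j" "j<k" "k<length a" "a!i > a!j" "a!i \<noteq> a!k"
    unfolding bad_def by blast
  hence "subseq [a!i,a!j,a!k] a" unfolding subseq3 by blast
  thus "\<exists>x y z. subseq [x,y,z] a \<and> (y < x \<and> x \<noteq> z)" using h by blast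
qed

lemma avoid4: "(avoids_pat a [1,0,0] \<and> avoids_pat a [1,0,2] \<and> avoids_pat a [2,0,1] \<and> avoids_pat a [2,1,0]) \<longleftrightarrow> \<not> bad a"
proof -
  define P where "P = (\<lambda>r::nat list. r = [1,0,0] \<or> r = [1,0,2] \<or> r = [2,0,1] \<or> r = [2,1,0])"
  have L: "(contains_pat a [1,0,0] \<or> contains_pat a [1,0,2] \<or> contains_pat a [2,0,1] \<or> contains_pat a [2,1,0])
    \<longleftrightarrow> (\<exists>ys. subseq ys a \<and> P (reduction ys))"
    unfolding contains_pat_def P_def by blast
  have P3: "P r \<Longrightarrow> length r = 3" for r unfolding P_def by auto
  have Pp: "P (reduction [x,y,z]) \<longleftrightarrow> (y < x \<and> x \<noteq> z)" for x y z
    unfolding P_def by (rule pats)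
  have "(contains_pat a [1,0,0] \<or> contains_pat a [1,0,2] \<or> contains_pat a [2,0,1] \<or> contains_pat a [2,1,0]) \<longleftrightarrow> bad a"
  proof -
    have "(\<exists>ys. subseq ys a \<and> P (reduction ys)) \<longleftrightarrow> (\<exists>x y z. subseq [x,y,z] a \<and> P (reduction [x,y,z]))"
      by (rule R[OF P3])
    also have "\<dots> \<longleftrightarrow> (\<exists>x y z. subseq [x,y,z] a \<and> (y < x \<and> x \<noteq> z))" unfolding Pp ..
    finally show ?thesis unfolding L B .
  qed
  thus ?thesis unfolding avoids_pat_def by blast
qed



definition WI :: "nat \<Rightarrow> nat list set" where "WI n = {b. inv_seq n b \<and> sorted b}"
definition Av :: "nat \<Rightarrow> nat list set" where "Av n = {a. inv_seq n a \<and> \<not> bad a}"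
definition lst :: "nat list \<Rightarrow> nat" where "lst b = last (0#b)"
definition Lk :: "nat \<Rightarrow> nat list set" where "Lk n = {a \<in> Av n. \<not> sorted a \<and> (\<exists>x. \<not> bad (a@[x]))}"
definition nl :: "nat list \<Rightarrow> nat" where "nl c = card {x. x < lst c \<and> (\<forall>e\<in>set c. x < e \<longrightarrow> e = lst c)}"

lemma I_count_Av: "I_count n = card (Av n)"
  unfolding I_count_def Av_def using avoid4 by presburger

lemma inv_seq_le: "inv_seq n a \<Longrightarrow> set a \<subseteq> {..n}"
  unfolding inv_seq_def by (auto simp: in_set_conv_nth) (metis le_trans less_imp_le_nat)

lemma fin_inv: "finite {a. inv_seq n a}"
proof -
  have "{a. inv_seq n a} \<subseteq> {xs. set xs \<subseteq> {..n} \<and> length xs = n}"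
    using inv_seq_le by (auto simp: inv_seq_def)
  moreover have "finite {xs. set xs \<subseteq> {..n} \<and> length xs = n}"
    by (rule finite_lists_length_eq) simp
  ultimately show ?thesis by (rule finite_subset)
qed

lemma fin_Av: "finite (Av n)" unfolding Av_def using fin_inv by (rule rev_finite_subset) auto
lemma fin_WI: "finite (WI n)" unfolding WI_def using fin_inv by (rule rev_finite_subset) auto
lemma fin_Lk: "finite (Lk n)" unfolding Lk_def using fin_Av by (rule rev_finite_subset) auto

lemma inv_snoc: "inv_seq (Suc n) (c@[x]) \<longleftrightarrow> inv_seq n c \<and> x \<le> n"
proof
  assume h: "inv_seq (Suc n) (c@[x])"
  hence l: "length c = n" by (simp add: inv_seq_def)
  have "\<forall>i<n. c!i \<le> i"
  proof (intro allI impI)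
    fix i assume "i < n"
    thus "c!i \<le> i" using h l unfolding inv_seq_def by (metis less_Suc_eq nth_append)
  qed
  moreover have "x \<le> n" using h l unfolding inv_seq_def by (metis lessI nth_append_length)
  ultimately show "inv_seq n c \<and> x \<le> n" using l by (simp add: inv_seq_def)
next
  assume "inv_seq n c \<and> x \<le> n"
  thus "inv_seq (Suc n) (c@[x])" unfolding inv_seq_def by (auto simp: nth_append less_Suc_eq)
qed

lemma bad_snoc: "bad (c@[x]) \<longleftrightarrow> bad c \<or> (\<exists>i j. i<j \<and> j < length c \<and> c!i > c!j \<and> c!i \<noteq> x)"
proof
  assume "bad (c@[x])"
  then obtain i j k where h: "i<j" "j<k" "k<length (c@[x])" "(c@[x])!i > (c@[x])!j" "(c@[x])!i \<noteq> (c@[x])!k"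
    unfolding bad_def by blast
  show "bad c \<or> (\<exists>i j. i<j \<and> j < length c \<and> c!i > c!j \<and> c!i \<noteq> x)"
  proof (cases "k < length c")
    case True
    hence "i<j" "j<k" "k<length c" "c!i > c!j" "c!i \<noteq> c!k" using h by (auto simp: nth_append)
    thus ?thesis unfolding bad_def by blast
  next
    case False
    hence "k = length c" using h by simp
    hence "i<j" "j < length c" "c!i > c!j" "c!i \<noteq> x" using h by (auto simp: nth_append)
    thus ?thesis by blast
  qed
next
  assume "bad c \<or> (\<exists>i j. i<j \<and> j < length c \<and> c!i > c!j \<and> c!i \<noteq> x)"
  thus "bad (c@[x])"
  proof
    assume "bad c"
    then obtain i j k where h: "i<j" "j<k" "k<length c" "c!i > c!j" "c!i \<noteq> c!k"
      unfolding bad_def by blast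
    hence "i<j" "j<k" "k<length (c@[x])" "(c@[x])!i > (c@[x])!j" "(c@[x])!i \<noteq> (c@[x])!k"
      by (auto simp: nth_append)
    thus ?thesis unfolding bad_def by blast
  next
    assume "\<exists>i j. i<j \<and> j < length c \<and> c!i > c!j \<and> c!i \<noteq> x"
    then obtain i j where h: "i<j" "j < length c" "c!i > c!j" "c!i \<noteq> x" by blast
    hence "i<j" "j<length c" "length c<length (c@[x])" "(c@[x])!i > (c@[x])!j" "(c@[x])!i \<noteq> (c@[x])!(length c)"
      by (auto simp: nth_append)
    thus ?thesis unfolding bad_def by blast
  qed
qed

lemma sorted_desc: "sorted c \<longleftrightarrow> \<not>(\<exists>i j. i<j \<and> j<length c \<and> c!i > c!j)"
  unfolding sorted_iff_nth_mono_less by (meson not_le)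

lemma sorted_lst: "sorted c \<Longrightarrow> e \<in> set c \<Longrightarrow> e \<le> lst c"
proof (induction c rule: rev_induct)
  case Nil thus ?case by simp
next
  case (snoc y ys)
  thus ?case by (auto simp: lst_def sorted_append)
qed

lemma lst_in: "c \<noteq> [] \<Longrightarrow> lst c \<in> set c"
  by (simp add: lst_def)

lemma lst_snoc[simp]: "lst (c@[z]) = z" by (simp add: lst_def)

lemma sorted_snoc_iff: "sorted c \<Longrightarrow> sorted (c@[z]) \<longleftrightarrow> lst c \<le> z"
proof -
  assume s: "sorted c"
  have "(\<forall>x\<in>set c. x \<le> z) \<longleftrightarrow> lst c \<le> z"
  proof
    assume a: "\<forall>x\<in>set c. x \<le> z"
    show "lst c \<le> z"
    proof (cases "c = []")
      case True thus ?thesis by (simp add: lst_def)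
    next
      case False thus ?thesis using a lst_in by blast
    qed
  next
    assume "lst c \<le> z" thus "\<forall>x\<in>set c. x \<le> z" using sorted_lst[OF s] by fastforce
  qed
  thus ?thesis using s by (simp add: sorted_append)
qed

lemma lst_le: "inv_seq n c \<Longrightarrow> lst c \<le> n"
proof (cases "c = []")
  case False
  assume "inv_seq n c"
  hence "set c \<subseteq> {..n}" by (rule inv_seq_le)
  thus ?thesis using lst_in[OF False] by auto
qed (simp add: lst_def)

lemma snoc_decomp: "length a = Suc n \<Longrightarrow> a = butlast a @ [last a]"
  by (metis append_butlast_last_id list.size(3) nat.simps(3))

lemma split_count:
  assumes Q: "Q \<subseteq> Av (Suc n)"
  shows "card Q = (\<Sum>c\<in>Av n. card {x. c@[x] \<in> Q})"
proof -
  let ?f = "\<lambda>(c,x). c@[x::nat]"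
  have img: "Q = ?f ` (SIGMA c:Av n. {x. c@[x] \<in> Q})"
  proof
    show "?f ` (SIGMA c:Av n. {x. c@[x] \<in> Q}) \<subseteq> Q" by auto
  next
    show "Q \<subseteq> ?f ` (SIGMA c:Av n. {x. c@[x] \<in> Q})"
    proof
      fix a assume a: "a \<in> Q"
      hence aa: "a \<in> Av (Suc n)" using Q by blast
      hence la: "length a = Suc n" by (simp add: Av_def inv_seq_def)
      have e: "a = butlast a @ [last a]" using snoc_decomp[OF la] .
      have "inv_seq n (butlast a)" using aa e inv_snoc by (metis Av_def mem_Collect_eq)
      moreover have "\<not> bad (butlast a)" using aa e bad_snoc by (metis Av_def mem_Collect_eq)
      ultimately have "butlast a \<in> Av n" by (simp add: Av_def)
      thus "a \<in> ?f ` (SIGMA c:Av n. {x. c@[x] \<in> Q})"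
        using a e by (intro image_eqI[of _ _ "(butlast a, last a)"]) auto
    qed
  qed
  have inj: "inj_on ?f (SIGMA c:Av n. {x. c@[x] \<in> Q})"
    by (auto simp: inj_on_def)
  have fin: "finite {x. c@[x] \<in> Q}" if "c \<in> Av n" for c
  proof -
    have "{x. c@[x] \<in> Q} \<subseteq> {..n}" using Q inv_snoc by (auto simp: Av_def)
    thus ?thesis by (rule finite_subset) simp
  qed
  have "card Q = card (SIGMA c:Av n. {x. c@[x] \<in> Q})"
    by (subst img, rule card_image[OF inj])
  also have "\<dots> = (\<Sum>c\<in>Av n. card {x. c@[x] \<in> Q})"
    using fin_Av fin by (simp add: card_SigmaI)
  finally show ?thesis .
qed

lemma WI_sum:
  "(\<Sum>b\<in>WI (Suc n). f b) = (\<Sum>c\<in>WI n. \<Sum>z\<in>{lst c..n}. f (c@[z]))"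
proof -
  let ?g = "\<lambda>(c,x). c@[x::nat]"
  have img: "WI (Suc n) = ?g ` (SIGMA c:WI n. {lst c..n})"
  proof
    show "?g ` (SIGMA c:WI n. {lst c..n}) \<subseteq> WI (Suc n)"
      by (auto simp: WI_def inv_snoc sorted_snoc_iff)
  next
    show "WI (Suc n) \<subseteq> ?g ` (SIGMA c:WI n. {lst c..n})"
    proof
      fix a assume a: "a \<in> WI (Suc n)"
      hence la: "length a = Suc n" by (simp add: WI_def inv_seq_def)
      have e: "a = butlast a @ [last a]" using snoc_decomp[OF la] .
      have i: "inv_seq n (butlast a)" "last a \<le> n" using a e inv_snoc by (metis WI_def mem_Collect_eq)+
      have s: "sorted (butlast a)" using a e by (metis WI_def mem_Collect_eq sorted_append)
      have "lst (butlast a) \<le> last a" using a e s sorted_snoc_iff by (metis WI_def mem_Collect_eq)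
      hence "(butlast a, last a) \<in> (SIGMA c:WI n. {lst c..n})" using i s by (simp add: WI_def)
      thus "a \<in> ?g ` (SIGMA c:WI n. {lst c..n})"
        using e by (intro image_eqI[of _ _ "(butlast a, last a)"]) auto
    qed
  qed
  have inj: "inj_on ?g (SIGMA c:WI n. {lst c..n})"
    by (auto simp: inj_on_def)
  have "(\<Sum>b\<in>WI (Suc n). f b) = (\<Sum>p\<in>(SIGMA c:WI n. {lst c..n}). f (?g p))"
    by (subst img, rule sum.reindex[OF inj, unfolded comp_def])
  also have "\<dots> = (\<Sum>c\<in>WI n. \<Sum>z\<in>{lst c..n}. f (c@[z]))"
    by (subst sum.Sigma[OF fin_WI]) (auto simp: split_def)
  finally show ?thesis .
qed



lemma bad_not_sorted: "bad c \<Longrightarrow> \<not> sorted c"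
  unfolding bad_def sorted_desc by (meson order.strict_trans)

lemma WI_Av: "WI n \<subseteq> Av n"
  unfolding WI_def Av_def using bad_not_sorted by blast

lemma notWI: "c \<in> Av n \<Longrightarrow> c \<notin> WI n \<Longrightarrow> \<not> sorted c"
  unfolding WI_def Av_def by blast

lemma A1: "c \<in> WI n \<Longrightarrow> {x. c@[x] \<in> Av (Suc n)} = {..n}"
proof -
  assume c: "c \<in> WI n"
  hence s: "sorted c" and i: "inv_seq n c" by (auto simp: WI_def)
  have "\<not> bad (c@[x])" for x
    using s bad_snoc bad_not_sorted sorted_desc by metis
  thus ?thesis using i by (auto simp: Av_def inv_snoc)
qed

lemma A2:
  assumes c: "c \<in> Av n" and ns: "\<not> sorted c"
  shows "card {x. c@[x] \<in> Av (Suc n)} = (if c \<in> Lk n then 1 else 0)"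
proof -
  obtain i j where d: "i<j" "j<length c" "c!i > c!j" using ns sorted_desc by blast
  have i: "inv_seq n c" "\<not> bad c" using c by (auto simp: Av_def)
  have sub: "{x. c@[x] \<in> Av (Suc n)} \<subseteq> {c!i}"
  proof
    fix x assume "x \<in> {x. c@[x] \<in> Av (Suc n)}"
    hence "\<not> bad (c@[x])" by (simp add: Av_def)
    hence "c!i = x" using d bad_snoc by blast
    thus "x \<in> {c!i}" by simp
  qed
  show ?thesis
  proof (cases "c \<in> Lk n")
    case True
    then obtain x where x: "\<not> bad (c@[x])" by (auto simp: Lk_def)
    hence xe: "c!i = x" using d bad_snoc by blast
    have "c!i \<le> i" "length c = n" using i(1) d by (auto simp: inv_seq_def)
    hence "x \<le> n" using xe d by linarith
    hence "c@[x] \<in> Av (Suc n)" using x i by (simp add: Av_def inv_snoc)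
    hence "{x. c@[x] \<in> Av (Suc n)} = {c!i}" using sub xe by blast
    thus ?thesis using True by simp
  next
    case False
    have "{x. c@[x] \<in> Av (Suc n)} = {}"
    proof (rule ccontr)
      assume "{x. c@[x] \<in> Av (Suc n)} \<noteq> {}"
      then obtain x where "c@[x] \<in> Av (Suc n)" by blast
      hence "\<not> bad (c@[x])" by (simp add: Av_def)
      hence "c \<in> Lk n" using c ns by (auto simp: Lk_def)
      thus False using False by blast
    qed
    thus ?thesis using False by simp
  qed
qed

lemma sum_ind: "finite A \<Longrightarrow> L \<subseteq> A \<Longrightarrow> (\<Sum>c\<in>A. (if c \<in> L then 1 else 0::nat)) = card L"
  by (simp add: sum.If_cases Int_absorb1)

lemma I1: "card (Av (Suc n)) = Suc n * card (WI n) + card (Lk n)"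
proof -
  have "card (Av (Suc n)) = (\<Sum>c\<in>Av n. card {x. c@[x] \<in> Av (Suc n)})"
    by (rule split_count) simp
  also have "\<dots> = (\<Sum>c\<in>Av n - WI n. card {x. c@[x] \<in> Av (Suc n)}) + (\<Sum>c\<in>WI n. card {x. c@[x] \<in> Av (Suc n)})"
    by (rule sum.subset_diff[OF WI_Av fin_Av])
  also have "(\<Sum>c\<in>WI n. card {x. c@[x] \<in> Av (Suc n)}) = (\<Sum>c\<in>WI n. Suc n)"
    by (rule sum.cong) (auto simp: A1)
  also have "(\<Sum>c\<in>Av n - WI n. card {x. c@[x] \<in> Av (Suc n)}) = (\<Sum>c\<in>Av n - WI n. (if c \<in> Lk n then 1 else 0))"
    by (rule sum.cong) (auto simp: A2 notWI)
  also have "\<dots> = card (Lk n)"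
    by (rule sum_ind[OF finite_Diff[OF fin_Av]]) (auto simp: Lk_def WI_def Av_def)
  finally show ?thesis by simp
qed

lemma desc_snoc_sorted:
  assumes s: "sorted c"
  shows "(\<exists>i j. i<j \<and> j<length (c@[x]) \<and> (c@[x])!i > (c@[x])!j \<and> (c@[x])!i \<noteq> y) \<longleftrightarrow> (\<exists>e\<in>set c. e > x \<and> e \<noteq> y)"
proof
  assume "\<exists>i j. i<j \<and> j<length (c@[x]) \<and> (c@[x])!i > (c@[x])!j \<and> (c@[x])!i \<noteq> y"
  then obtain i j where h: "i<j" "j<length (c@[x])" "(c@[x])!i > (c@[x])!j" "(c@[x])!i \<noteq> y" by blast
  show "\<exists>e\<in>set c. e > x \<and> e \<noteq> y"
  proof (cases "j < length c")
    case True
    hence "c!i > c!j" using h by (simp add: nth_append)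
    thus ?thesis using True h(1) s sorted_desc by blast
  next
    case False
    hence "j = length c" using h by simp
    hence "c!i > x" "c!i \<noteq> y" "i < length c" using h by (auto simp: nth_append)
    thus ?thesis by (meson nth_mem)
  qed
next
  assume "\<exists>e\<in>set c. e > x \<and> e \<noteq> y"
  then obtain i where "i < length c" "c!i > x" "c!i \<noteq> y" by (auto simp: in_set_conv_nth)
  hence "i<length c \<and> length c<length (c@[x]) \<and> (c@[x])!i > (c@[x])!(length c) \<and> (c@[x])!i \<noteq> y"
    by (simp add: nth_append)
  thus "\<exists>i j. i<j \<and> j<length (c@[x]) \<and> (c@[x])!i > (c@[x])!j \<and> (c@[x])!i \<noteq> y" by blast
qed

lemma A3:
  assumes c: "c \<in> WI n"
  shows "{x. c@[x] \<in> Lk (Suc n)} = {x. x < lst c \<and> (\<forall>e\<in>set c. x < e \<longrightarrow> e = lst c)}"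
proof -
  have s: "sorted c" and i: "inv_seq n c" using c by (auto simp: WI_def)
  have nb: "\<not> bad (c@[x])" for x
    using s bad_snoc bad_not_sorted sorted_desc by metis
  have "c@[x] \<in> Lk (Suc n) \<longleftrightarrow> x < lst c \<and> (\<forall>e\<in>set c. x < e \<longrightarrow> e = lst c)" for x
  proof
    assume h: "c@[x] \<in> Lk (Suc n)"
    hence xl: "x < lst c" using sorted_snoc_iff[OF s] by (auto simp: Lk_def)
    from h obtain y where "\<not> bad ((c@[x])@[y])" by (auto simp: Lk_def)
    hence "\<not> (\<exists>e\<in>set c. e > x \<and> e \<noteq> y)" using bad_snoc[of "c@[x]" y] desc_snoc_sorted[OF s] by blast
    hence "\<forall>e\<in>set c. x < e \<longrightarrow> e = y" by blast
    moreover have "lst c \<in> set c" using xl lst_in by (cases "c = []") (auto simp: lst_def)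
    ultimately show "x < lst c \<and> (\<forall>e\<in>set c. x < e \<longrightarrow> e = lst c)" using xl by metis
  next
    assume h: "x < lst c \<and> (\<forall>e\<in>set c. x < e \<longrightarrow> e = lst c)"
    have "x \<le> n" using h lst_le[OF i] by linarith
    hence "c@[x] \<in> Av (Suc n)" using nb i by (simp add: Av_def inv_snoc)
    moreover have "\<not> sorted (c@[x])" using h sorted_snoc_iff[OF s] by simp
    moreover have "\<not> bad ((c@[x])@[lst c])"
      using bad_snoc[of "c@[x]" "lst c"] desc_snoc_sorted[OF s] nb h by blast
    ultimately show "c@[x] \<in> Lk (Suc n)" by (auto simp: Lk_def)
  qed
  thus ?thesis by blast
qed

lemma A4:
  assumes c: "c \<in> Av n" and ns: "\<not> sorted c"
  shows "{x. c@[x] \<in> Lk (Suc n)} = {x. c@[x] \<in> Av (Suc n)}"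
proof
  show "{x. c@[x] \<in> Lk (Suc n)} \<subseteq> {x. c@[x] \<in> Av (Suc n)}" by (auto simp: Lk_def)
next
  show "{x. c@[x] \<in> Av (Suc n)} \<subseteq> {x. c@[x] \<in> Lk (Suc n)}"
  proof
    fix x assume "x \<in> {x. c@[x] \<in> Av (Suc n)}"
    hence a: "c@[x] \<in> Av (Suc n)" by simp
    hence nb: "\<not> bad (c@[x])" by (simp add: Av_def)
    have nbc: "\<not> bad c" using c by (simp add: Av_def)
    have "\<not> sorted (c@[x])" using ns by (auto simp: sorted_append)
    moreover have "\<not> bad ((c@[x])@[x])"
    proof
      assume "bad ((c@[x])@[x])"
      then obtain i j where h: "i<j" "j<length (c@[x])" "(c@[x])!i > (c@[x])!j" "(c@[x])!i \<noteq> x"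
        using nb bad_snoc[of "c@[x]" x] by blast
      obtain i' j' where d: "i'<j'" "j'<length c" "c!i' > c!j'" using ns sorted_desc by blast
      have ci': "c!i' = x" using d nb bad_snoc by blast
      show False
      proof (cases "j < length c")
        case True
        hence "c!i > c!j" "c!i \<noteq> x" "i < j" using h by (auto simp: nth_append)
        thus False using nb bad_snoc True by blast
      next
        case False
        hence jj: "j = length c" using h by simp
        hence il: "i < length c" and gi: "c!i > x" using h by (auto simp: nth_append)
        consider "i < j'" | "i = j'" | "j' < i" by linarith
        thus False
        proof cases
          case 1
          hence "c!i > c!j'" using gi ci' d by linarith
          thus False using nb bad_snoc 1 d gi by (metis less_irrefl)
        next
          case 2 thus False using gi ci' d by simp
        next
          case 3
          hence "i' < j'" "j' < i" "i < length c" "c!i' > c!j'" "c!i' \<noteq> c!i" using d il gi ci' by auto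
          thus False using nbc unfolding bad_def by blast
        qed
      qed
    qed
    ultimately show "x \<in> {x. c@[x] \<in> Lk (Suc n)}" using a by (auto simp: Lk_def)
  qed
qed

lemma K1: "card (Lk (Suc n)) = card (Lk n) + (\<Sum>c\<in>WI n. nl c)"
proof -
  have "card (Lk (Suc n)) = (\<Sum>c\<in>Av n. card {x. c@[x] \<in> Lk (Suc n)})"
    by (rule split_count) (auto simp: Lk_def)
  also have "\<dots> = (\<Sum>c\<in>Av n - WI n. card {x. c@[x] \<in> Lk (Suc n)}) + (\<Sum>c\<in>WI n. card {x. c@[x] \<in> Lk (Suc n)})"
    by (rule sum.subset_diff[OF WI_Av fin_Av])
  also have "(\<Sum>c\<in>WI n. card {x. c@[x] \<in> Lk (Suc n)}) = (\<Sum>c\<in>WI n. nl c)"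
    by (rule sum.cong) (auto simp: A3 nl_def)
  also have "(\<Sum>c\<in>Av n - WI n. card {x. c@[x] \<in> Lk (Suc n)}) = (\<Sum>c\<in>Av n - WI n. (if c \<in> Lk n then 1 else 0))"
    by (rule sum.cong) (auto simp: A2 A4 notWI)
  also have "\<dots> = card (Lk n)"
    by (rule sum_ind[OF finite_Diff[OF fin_Av]]) (auto simp: Lk_def WI_def Av_def)
  finally show ?thesis by simp
qed



definition NLs :: "nat \<Rightarrow> nat" where "NLs n = (\<Sum>c\<in>WI n. nl c)"

lemma N1:
  assumes c: "c \<in> WI n" and z: "lst c \<le> z"
  shows "nl (c@[z]) = (if z = lst c then nl c else z - lst c)"
proof (cases "z = lst c")
  case True
  have "{x. x < lst (c@[z]) \<and> (\<forall>e\<in>set (c@[z]). x < e \<longrightarrow> e = lst (c@[z]))}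
       = {x. x < lst c \<and> (\<forall>e\<in>set c. x < e \<longrightarrow> e = lst c)}" using True by auto
  thus ?thesis using True by (simp add: nl_def)
next
  case False
  have s: "sorted c" using c by (simp add: WI_def)
  have "{x. x < lst (c@[z]) \<and> (\<forall>e\<in>set (c@[z]). x < e \<longrightarrow> e = lst (c@[z]))} = {lst c..<z}"
  proof (intro set_eqI iffI)
    fix x assume h: "x \<in> {x. x < lst (c@[z]) \<and> (\<forall>e\<in>set (c@[z]). x < e \<longrightarrow> e = lst (c@[z]))}"
    have "lst c \<le> x"
    proof (rule ccontr)
      assume "\<not> lst c \<le> x"
      hence "x < lst c" by simp
      moreover have "lst c \<in> set c" using \<open>x < lst c\<close> lst_in by (cases "c = []") (auto simp: lst_def)
      ultimately show False using h False by auto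
    qed
    thus "x \<in> {lst c..<z}" using h by simp
  next
    fix x assume h: "x \<in> {lst c..<z}"
    have "\<forall>e\<in>set c. \<not> x < e" using sorted_lst[OF s] h by fastforce
    thus "x \<in> {x. x < lst (c@[z]) \<and> (\<forall>e\<in>set (c@[z]). x < e \<longrightarrow> e = lst (c@[z]))}" using h by auto
  qed
  thus ?thesis using False by (simp add: nl_def)
qed

lemma N2: "NLs (Suc n) = NLs n + (\<Sum>c\<in>WI n. \<Sum>z\<in>{lst c<..n}. z - lst c)"
proof -
  have "NLs (Suc n) = (\<Sum>c\<in>WI n. \<Sum>z\<in>{lst c..n}. nl (c@[z]))"
    unfolding NLs_def by (rule WI_sum)
  also have "\<dots> = (\<Sum>c\<in>WI n. nl c + (\<Sum>z\<in>{lst c<..n}. z - lst c))"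
  proof (rule sum.cong[OF refl])
    fix c assume c: "c \<in> WI n"
    have l: "lst c \<le> n" using c lst_le by (simp add: WI_def)
    have e: "{lst c..n} = insert (lst c) {lst c<..n}" using l by auto
    have "(\<Sum>z\<in>{lst c..n}. nl (c@[z])) = nl (c@[lst c]) + (\<Sum>z\<in>{lst c<..n}. nl (c@[z]))"
      unfolding e by (subst sum.insert) auto
    also have "nl (c@[lst c]) = nl c" using N1[OF c] by simp
    also have "(\<Sum>z\<in>{lst c<..n}. nl (c@[z])) = (\<Sum>z\<in>{lst c<..n}. z - lst c)"
      by (rule sum.cong[OF refl]) (auto simp: N1[OF c])
    finally show "(\<Sum>z\<in>{lst c..n}. nl (c@[z])) = nl c + (\<Sum>z\<in>{lst c<..n}. z - lst c)" .
  qed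
  also have "\<dots> = NLs n + (\<Sum>c\<in>WI n. \<Sum>z\<in>{lst c<..n}. z - lst c)"
    by (simp add: NLs_def sum.distrib)
  finally show ?thesis .
qed

lemma Tid: assumes "(l::nat) \<le> n" shows "(\<Sum>z\<in>{l<..n}. z - l) = (\<Sum>z\<in>{l..n}. n - z)"
  using assms
proof (induction n rule: dec_induct)
  case base thus ?case by simp
next
  case (step m)
  have a: "{l<..Suc m} = insert (Suc m) {l<..m}" using step by auto
  have b: "{l..Suc m} = insert (Suc m) {l..m}" using step by auto
  have A: "(\<Sum>z\<in>{l<..Suc m}. z - l) = (Suc m - l) + (\<Sum>z\<in>{l..m}. m - z)"
    unfolding a using step.IH by (subst sum.insert) auto
  have "(\<Sum>z\<in>{l..Suc m}. Suc m - z) = (\<Sum>z\<in>{l..m}. Suc m - z)"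
    unfolding b by (subst sum.insert) auto
  also have "\<dots> = (\<Sum>z\<in>{l..m}. 1 + (m - z))"
    by (rule sum.cong) auto
  also have "\<dots> = (\<Sum>z\<in>{l..m}. 1) + (\<Sum>z\<in>{l..m}. m - z)" by (rule sum.distrib)
  also have "(\<Sum>z\<in>{l..m}. (1::nat)) = card {l..m}" by simp
  finally have B: "(\<Sum>z\<in>{l..Suc m}. Suc m - z) = card {l..m} + (\<Sum>z\<in>{l..m}. m - z)" .
  show ?case unfolding A B card_atLeastAtMost ..
qed

lemma T2: "(\<Sum>c\<in>WI n. \<Sum>z\<in>{lst c<..n}. z - lst c) = (\<Sum>b\<in>WI (Suc n). n - lst b)"
proof -
  have "(\<Sum>b\<in>WI (Suc n). n - lst b) = (\<Sum>c\<in>WI n. \<Sum>z\<in>{lst c..n}. n - lst (c@[z]))"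
    by (rule WI_sum)
  also have "\<dots> = (\<Sum>c\<in>WI n. \<Sum>z\<in>{lst c<..n}. z - lst c)"
    by (rule sum.cong[OF refl]) (simp add: Tid lst_le WI_def)
  finally show ?thesis by simp
qed

lemma C1: "card (WI (Suc m)) = (\<Sum>c\<in>WI m. Suc m - lst c)"
proof -
  have "card (WI (Suc m)) = (\<Sum>b\<in>WI (Suc m). 1)" by simp
  also have "\<dots> = (\<Sum>c\<in>WI m. \<Sum>z\<in>{lst c..m}. 1)" by (rule WI_sum)
  also have "\<dots> = (\<Sum>c\<in>WI m. Suc m - lst c)" by simp
  finally show ?thesis .
qed

definition Ls :: "nat \<Rightarrow> real" where "Ls m = (\<Sum>c\<in>WI m. real (lst c))"

lemma C1r: "real (card (WI (Suc m))) = real (Suc m) * real (card (WI m)) - Ls m"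
proof -
  have "real (card (WI (Suc m))) = (\<Sum>c\<in>WI m. real (Suc m - lst c))" by (simp add: C1)
  also have "\<dots> = (\<Sum>c\<in>WI m. real (Suc m) - real (lst c))"
    by (rule sum.cong[OF refl]) (auto simp: WI_def dest!: lst_le)
  also have "\<dots> = real (Suc m) * real (card (WI m)) - Ls m"
    by (simp add: sum_subtractf Ls_def)
  finally show ?thesis .
qed

lemma T2r: "real (\<Sum>c\<in>WI n. \<Sum>z\<in>{lst c<..n}. z - lst c) = real n * real (card (WI (Suc n))) - Ls (Suc n)"
proof -
  have "real (\<Sum>c\<in>WI n. \<Sum>z\<in>{lst c<..n}. z - lst c) = (\<Sum>b\<in>WI (Suc n). real (n - lst b))"
    by (simp add: T2)
  also have "\<dots> = (\<Sum>b\<in>WI (Suc n). real n - real (lst b))"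
  proof (rule sum.cong[OF refl])
    fix b assume "b \<in> WI (Suc n)"
    hence l: "length b = Suc n" "\<forall>i<Suc n. b!i \<le> i" by (auto simp: WI_def inv_seq_def)
    have "b \<noteq> []" using l by auto
    hence "lst b = b ! n" using l by (simp add: lst_def last_conv_nth)
    hence "lst b \<le> n" using l by simp
    thus "real (n - lst b) = real n - real (lst b)" by simp
  qed
  also have "\<dots> = real n * real (card (WI (Suc n))) - Ls (Suc n)"
    by (simp add: sum_subtractf Ls_def)
  finally show ?thesis .
qed



definition cm :: "nat \<Rightarrow> nat list \<Rightarrow> nat list \<Rightarrow> nat list" where
  "cm k p c = p @ k # map (\<lambda>x. x + k) c"

lemma cm_len: "length (cm k p c) = length p + Suc (length c)" by (simp add: cm_def)

lemma cm_nth_lt: "i < length p \<Longrightarrow> cm k p c ! i = p ! i" by (simp add: cm_def nth_append)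
lemma cm_nth_k: "length p = k \<Longrightarrow> cm k p c ! k = k" by (simp add: cm_def nth_append)
lemma cm_nth_gt: "length p = k \<Longrightarrow> t < length c \<Longrightarrow> cm k p c ! (Suc k + t) = c ! t + k"
  by (simp add: cm_def nth_append)

lemma cm_WI:
  assumes p: "p \<in> WI k" and c: "c \<in> WI m"
  shows "cm k p c \<in> WI (k + Suc m)"
proof -
  have lp: "length p = k" and ip: "\<forall>i<k. p!i \<le> i" and sp: "sorted p" using p by (auto simp: WI_def inv_seq_def)
  have lc: "length c = m" and ic: "\<forall>i<m. c!i \<le> i" and sc: "sorted c" using c by (auto simp: WI_def inv_seq_def)
  have inv: "\<forall>i<k + Suc m. cm k p c ! i \<le> i"
  proof (intro allI impI)
    fix i assume i: "i < k + Suc m"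
    consider "i < k" | "i = k" | "k < i" by linarith
    thus "cm k p c ! i \<le> i"
    proof cases
      case 1 thus ?thesis using ip lp by (simp add: cm_nth_lt)
    next
      case 2 thus ?thesis using lp by (simp add: cm_nth_k)
    next
      case 3
      then obtain t where "i = Suc (k + t)" using less_iff_Suc_add by blast
      hence t: "i = Suc k + t" by simp
      hence "t < m" using i by simp
      moreover have "c!t \<le> t" using ic \<open>t < m\<close> by simp
      ultimately show ?thesis using t cm_nth_gt[OF lp, of t c] lc by simp
    qed
  qed
  have setp: "\<forall>x\<in>set p. x < k"
  proof
    fix x assume "x \<in> set p"
    then obtain i where "i < length p" "p!i = x" by (auto simp: in_set_conv_nth)
    thus "x < k" using ip lp by (metis le_less_trans)
  qed
  have sm: "sorted (map (\<lambda>x. x + k) c)" using sc by (simp add: sorted_map)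
  have "sorted (k # map (\<lambda>x. x + k) c)" using sm by simp
  moreover have "\<forall>x\<in>set p. \<forall>y\<in>set (k # map (\<lambda>x. x + k) c). x \<le> y" using setp by fastforce
  ultimately have "sorted (cm k p c)" using sp unfolding cm_def sorted_append by blast
  thus ?thesis using inv lp lc by (simp add: WI_def inv_seq_def cm_len)
qed

lemma cm_nth_lt_i:
  assumes p: "p \<in> WI k" and c: "c \<in> WI m" and i: "k < i" "i < k + Suc m"
  shows "cm k p c ! i < i"
proof -
  have lp: "length p = k" using p by (auto simp: WI_def inv_seq_def)
  have lc: "length c = m" and ic: "\<forall>i<m. c!i \<le> i" using c by (auto simp: WI_def inv_seq_def)
  obtain t where "i = Suc (k + t)" using i less_iff_Suc_add by blast
  hence t: "i = Suc k + t" by simp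
  hence "t < m" using i by simp
  moreover have "c!t \<le> t" using ic \<open>t < m\<close> by simp
  ultimately show ?thesis using t cm_nth_gt[OF lp, of t c] lc by simp
qed

lemma cm_inj_k:
  assumes p: "p \<in> WI k" and c: "c \<in> WI (n - k)" and p': "p' \<in> WI k'" and c': "c' \<in> WI (n - k')"
    and k: "k \<le> n" "k' \<le> n" and e: "cm k p c = cm k' p' c'"
  shows "k = k'"
proof (rule ccontr)
  assume "k \<noteq> k'"
  hence "k < k' \<or> k' < k" by linarith
  thus False
  proof
    assume kk: "k < k'"
    have "cm k p c ! k' < k'" using cm_nth_lt_i[OF p c kk] k kk by simp
    moreover have "cm k' p' c' ! k' = k'" using p' by (simp add: cm_nth_k WI_def inv_seq_def)
    ultimately show False using e by simp
  next
    assume kk: "k' < k"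
    have "cm k' p' c' ! k < k" using cm_nth_lt_i[OF p' c' kk] k kk by simp
    moreover have "cm k p c ! k = k" using p by (simp add: cm_nth_k WI_def inv_seq_def)
    ultimately show False using e by simp
  qed
qed

lemma cm_inj:
  assumes p: "p \<in> WI k" and p': "p' \<in> WI k" and e: "cm k p c = cm k p' c'"
  shows "p = p' \<and> c = c'"
proof -
  have "length p = length p'" using p p' by (simp add: WI_def inv_seq_def)
  hence "p = p' \<and> map (\<lambda>x. x + k) c = map (\<lambda>x. x + k) c'" using e by (simp add: cm_def)
  moreover have "inj (\<lambda>x::nat. x + k)" by (simp add: inj_def)
  ultimately show ?thesis by (simp add: inj_map_eq_map)
qed

lemma cm_surj:
  assumes b: "b \<in> WI (Suc n)"
  shows "\<exists>k\<le>n. \<exists>p\<in>WI k. \<exists>c\<in>WI (n - k). b = cm k p c"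
proof -
  have lb: "length b = Suc n" and ib: "\<forall>i<Suc n. b!i \<le> i" and sb: "sorted b"
    using b by (auto simp: WI_def inv_seq_def)
  define K where "K = {i. i \<le> n \<and> b!i = i}"
  have "b!0 \<le> 0" using ib by blast
  hence "0 \<in> K" by (simp add: K_def)
  have fK: "finite K" by (simp add: K_def)
  define k where "k = Max K"
  have kK: "k \<in> K" unfolding k_def using fK \<open>0 \<in> K\<close> by (intro Max_in) auto
  hence kn: "k \<le> n" and bk: "b!k = k" by (auto simp: K_def)
  have mx: "b!i < i" if "k < i" "i \<le> n" for i
  proof -
    have "i \<notin> K" using that fK k_def Max_ge leD by blast
    hence "b!i \<noteq> i" using that by (simp add: K_def)
    moreover have "b!i \<le> i" using ib that by simp
    ultimately show ?thesis by simp
  qed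
  define p where "p = take k b"
  define d where "d = drop (Suc k) b"
  define c where "c = map (\<lambda>x. x - k) d"
  have ld: "length d = n - k" using lb kn by (simp add: d_def)
  have dn: "d!t = b!(Suc k + t)" if "t < n - k" for t using that kn lb by (simp add: d_def)
  have dge: "d!t \<ge> k" if "t < n - k" for t
  proof -
    have "b!k \<le> b!(Suc k + t)" using sb lb that by (auto simp: sorted_iff_nth_mono)
    thus ?thesis using bk dn that by simp
  qed
  have md: "map (\<lambda>x. x + k) c = d"
    by (rule nth_equalityI) (auto simp: c_def ld dge)
  have eb: "b = cm k p c"
    unfolding cm_def md p_def d_def using id_take_nth_drop[of k b] lb kn bk by simp
  have pW: "p \<in> WI k"
  proof -
    have "length p = k" using lb kn by (simp add: p_def)
    moreover have "\<forall>i<k. p!i \<le> i" using ib kn by (simp add: p_def)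
    moreover have "sorted p" using sb unfolding p_def by (rule sorted_wrt_take)
    ultimately show ?thesis by (simp add: WI_def inv_seq_def)
  qed
  have cW: "c \<in> WI (n - k)"
  proof -
    have "length c = n - k" using ld by (simp add: c_def)
    moreover have "\<forall>t<n-k. c!t \<le> t"
    proof (intro allI impI)
      fix t assume t: "t < n - k"
      have "b!(Suc k + t) < Suc k + t" using mx[of "Suc k + t"] t by simp
      thus "c!t \<le> t" using t dn ld by (simp add: c_def)
    qed
    moreover have "sorted c"
      unfolding sorted_iff_nth_mono
    proof (intro allI impI)
      fix i j assume ij: "i \<le> j" "j < length c"
      hence "b!(Suc k + i) \<le> b!(Suc k + j)" using sb lb ld by (auto simp: sorted_iff_nth_mono c_def)
      thus "c!i \<le> c!j" using ij ld dn by (simp add: c_def)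
    qed
    ultimately show ?thesis by (simp add: WI_def inv_seq_def)
  qed
  show ?thesis using kn pW cW eb by blast
qed

lemma catalan_rec: "card (WI (Suc n)) = (\<Sum>k\<le>n. card (WI k) * card (WI (n - k)))"
proof -
  let ?f = "\<lambda>(k, p, c). cm k p c"
  let ?S = "SIGMA k:{..n}. WI k \<times> WI (n - k)"
  have img: "WI (Suc n) = ?f ` ?S"
  proof
    show "?f ` ?S \<subseteq> WI (Suc n)"
    proof
      fix b assume "b \<in> ?f ` ?S"
      then obtain k p c where "k \<le> n" "p \<in> WI k" "c \<in> WI (n - k)" "b = cm k p c" by auto
      moreover have "k + Suc (n - k) = Suc n" using \<open>k \<le> n\<close> by simp
      ultimately show "b \<in> WI (Suc n)" using cm_WI by metis
    qed
  next
    show "WI (Suc n) \<subseteq> ?f ` ?S"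
    proof
      fix b assume "b \<in> WI (Suc n)"
      then obtain k p c where "k \<le> n" "p \<in> WI k" "c \<in> WI (n - k)" "b = cm k p c" using cm_surj by blast
      thus "b \<in> ?f ` ?S" by (intro image_eqI[of _ _ "(k, p, c)"]) auto
    qed
  qed
  have inj: "inj_on ?f ?S"
  proof (rule inj_onI)
    fix x y assume x: "x \<in> ?S" and y: "y \<in> ?S" and e: "?f x = ?f y"
    obtain k p c where xx: "x = (k, p, c)" by (cases x) auto
    obtain k' p' c' where yy: "y = (k', p', c')" by (cases y) auto
    have h: "k \<le> n" "p \<in> WI k" "c \<in> WI (n-k)" "k' \<le> n" "p' \<in> WI k'" "c' \<in> WI (n-k')" "cm k p c = cm k' p' c'"
      using x y e xx yy by auto
    have "k = k'" using cm_inj_k[OF h(2,3,5,6,1,4,7)] .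
    thus "x = y" using cm_inj[of p k p' c c'] h xx yy by auto
  qed
  have "card (WI (Suc n)) = card ?S" by (subst img, rule card_image[OF inj])
  also have "\<dots> = (\<Sum>k\<le>n. card (WI k \<times> WI (n - k)))"
    by (simp add: card_SigmaI fin_WI)
  also have "\<dots> = (\<Sum>k\<le>n. card (WI k) * card (WI (n - k)))"
    by (simp add: card_cartesian_product)
  finally show ?thesis .
qed



definition cc :: "nat \<Rightarrow> real" where "cc n = real (card (WI n))"
definition nls :: "nat \<Rightarrow> real" where "nls n = real (NLs n)"
definition lk :: "nat \<Rightarrow> real" where "lk n = real (card (Lk n))"
definition ii :: "nat \<Rightarrow> real" where "ii n = real (I_count n)"

lemma inv0: "inv_seq 0 a \<longleftrightarrow> a = []" by (simp add: inv_seq_def)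
lemma WI0: "WI 0 = {[]}" by (auto simp: WI_def inv0)
lemma Av0: "Av 0 = {[]}" by (auto simp: Av_def inv0 bad_def)
lemma Lk0: "Lk 0 = {}" by (auto simp: Lk_def Av_def inv0)

lemma cc0: "cc 0 = 1" by (simp add: cc_def WI0)
lemma nls0: "nls 0 = 0" by (simp add: nls_def NLs_def WI0 nl_def lst_def)
lemma lk0: "lk 0 = 0" by (simp add: lk_def Lk0)
lemma ii0: "ii 0 = 1" by (simp add: ii_def I_count_Av Av0)

lemma R1: "ii (Suc n) = real (Suc n) * cc n + lk n"
  by (simp add: ii_def I_count_Av I1 cc_def lk_def algebra_simps)

lemma R2: "lk (Suc n) = lk n + nls n"
  by (simp add: lk_def K1 nls_def NLs_def)

lemma R3: "nls (Suc n) = nls n + cc (Suc (Suc n)) - 2 * cc (Suc n)"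
proof -
  have "nls (Suc n) = nls n + (real n * cc (Suc n) - Ls (Suc n))"
    using T2r[of n] by (simp add: nls_def N2 cc_def)
  moreover have "cc (Suc (Suc n)) = real (Suc (Suc n)) * cc (Suc n) - Ls (Suc n)"
    using C1r[of "Suc n"] by (simp add: cc_def)
  ultimately show ?thesis by (simp add: algebra_simps)
qed

lemma R4: "cc (Suc n) = (\<Sum>k\<le>n. cc k * cc (n - k))"
  by (simp add: cc_def catalan_rec)

lemma cc1: "cc (Suc 0) = 1" using R4[of 0] cc0 by simp

definition "Cf = Abs_fps cc"
definition "NLf = Abs_fps nls"
definition "LKf = Abs_fps lk"
definition "IIf = Abs_fps ii"
definition "Pf = Abs_fps (\<lambda>n. real (Suc n) * cc n)"

lemma Fa: "Cf = 1 + fps_X * Cf^2"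
proof (rule fps_ext)
  fix n show "fps_nth Cf n = fps_nth (1 + fps_X * Cf^2) n"
  proof (cases n)
    case 0 thus ?thesis by (simp add: Cf_def cc0)
  next
    case (Suc m)
    have "fps_nth (fps_X * Cf^2) (Suc m) = fps_nth (Cf^2) m" by (simp only: fps_X_mult_nth) simp
    also have "\<dots> = (\<Sum>i=0..m. cc i * cc (m - i))" by (simp add: power2_eq_square fps_mult_nth Cf_def)
    also have "\<dots> = cc (Suc m)" by (simp add: R4 atLeast0AtMost)
    finally show ?thesis using Suc by (simp add: Cf_def)
  qed
qed

lemma fps_nth_2: "fps_nth (2 * (f::real fps)) n = 2 * fps_nth f n"
  by (simp only: mult_2 fps_add_nth)

lemma Fb: "fps_X * NLf - fps_X * (fps_X * NLf) = Cf - 1 - fps_X - fps_X * (Cf - 1) - fps_X * (Cf - 1)"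
proof (rule fps_ext)
  fix n
  show "fps_nth (fps_X * NLf - fps_X * (fps_X * NLf)) n = fps_nth (Cf - 1 - fps_X - fps_X * (Cf - 1) - fps_X * (Cf - 1)) n"
  proof (cases n)
    case 0 thus ?thesis by (simp add: Cf_def cc0)
  next
    case (Suc m)
    note Sm = Suc
    show ?thesis
    proof (cases m)
      case 0 thus ?thesis using Sm by (simp add: Cf_def NLf_def cc0 cc1 nls0 fps_X_nth)
    next
      case (Suc k)
      thus ?thesis using Sm R3[of k]
        by (simp add: Cf_def NLf_def fps_X_nth fps_nth_2)
    qed
  qed
qed



lemma Fc: "LKf - fps_X * LKf = fps_X * NLf"
proof (rule fps_ext)
  fix n show "fps_nth (LKf - fps_X * LKf) n = fps_nth (fps_X * NLf) n"
    by (cases n) (simp_all add: LKf_def NLf_def lk0 R2)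
qed

lemma Fd: "IIf = 1 + fps_X * Pf + fps_X * LKf"
proof (rule fps_ext)
  fix n show "fps_nth IIf n = fps_nth (1 + fps_X * Pf + fps_X * LKf) n"
    by (cases n) (simp_all add: IIf_def Pf_def LKf_def ii0 R1)
qed

lemma Fe: "Pf = fps_deriv (fps_X * Cf)"
proof (rule fps_ext)
  fix n show "fps_nth Pf n = fps_nth (fps_deriv (fps_X * Cf)) n"
    by (simp add: Pf_def Cf_def algebra_simps)
qed

lemma deriv_lin: "fps_deriv (1 - 4 * fps_X :: real fps) = - 4"
  by simp

lemma ST:
  fixes S :: "real fps"
  assumes "fps_nth S 0 = 1" and "S ^ 2 = 1 - 4 * fps_X"
  shows "S = 1 - 2 * fps_X * Cf"
proof -
  define T where "T = 1 - 2 * fps_X * Cf"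
  have T2: "T^2 = 1 - 4 * fps_X" using Fa unfolding T_def by algebra
  have "(S - T) * (S + T) = 0" using T2 assms(2) by algebra
  moreover have "S + T \<noteq> 0"
  proof
    assume "S + T = 0"
    hence "fps_nth (S + T) 0 = 0" by simp
    thus False using assms(1) by (simp add: T_def)
  qed
  ultimately have "S - T = 0" by simp
  thus ?thesis unfolding T_def by simp
qed

lemma PS:
  fixes S :: "real fps"
  assumes "fps_nth S 0 = 1" and S2: "S ^ 2 = 1 - 4 * fps_X"
  shows "Pf * S = 1"
proof -
  have st: "2 * (fps_X * Cf) = 1 - S" using ST[OF assms] by (simp add: algebra_simps)
  have "fps_deriv (2 * (fps_X * Cf)) = fps_deriv (1 - S)" using st by simp
  hence a: "2 * Pf = - fps_deriv S" unfolding Fe by simp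
  have "fps_deriv (S^2) = fps_deriv (1 - 4 * fps_X :: real fps)" using S2 by simp
  hence "2 * fps_deriv S * S = - 4" by (simp add: fps_deriv_power' deriv_lin)
  hence b: "2 * S * fps_deriv S = - 4" by (simp add: mult.commute mult.left_commute)
  have "4 * (Pf * S) = 4 * 1" using a b by algebra
  moreover have "(4::real fps) \<noteq> 0"
  proof
    assume "(4::real fps) = 0"
    hence "fps_nth (4::real fps) 0 = 0" by simp
    thus False by simp
  qed
  ultimately show ?thesis by simp
qed

lemma main_id:
  fixes S :: "real fps"
  assumes "fps_nth S 0 = 1" and S2: "S ^ 2 = 1 - 4 * fps_X"
  shows "IIf * (2 * (1 - fps_X) ^ 2 * (1 - 4 * fps_X)) =
    (1 - 4 * fps_X) * (1 - 2 * fps_X) * (3 - 2 * fps_X)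
             - (1 - 8 * fps_X + 12 * fps_X ^ 2 - 2 * fps_X ^ 3) * S"
  using Fd Fc Fb ST[OF assms] PS[OF assms] S2 by algebra



lemma vals: "map I_count [0..<6] = [1, 1, 2, 6, 21, 76]"
proof -
  have c2: "cc 2 = 2" using R4[of 1] cc0 cc1 by (simp add: numeral_2_eq_2)
  have c3: "cc 3 = 5" using R4[of 2] cc0 cc1 c2
    by (simp add: numeral_3_eq_3 numeral_2_eq_2)
  have c4: "cc 4 = 14"
  proof -
    have "cc (Suc 3) = (\<Sum>k\<le>3. cc k * cc (3 - k))" by (rule R4)
    also have "\<dots> = 14" using cc0 cc1 c2 c3 by (simp add: numeral_3_eq_3 numeral_2_eq_2)
    finally show ?thesis by simp
  qed
  have n1: "nls 1 = 0" using R3[of 0] nls0 cc1 c2 by (simp add: numeral_2_eq_2)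
  have n2: "nls 2 = 1" using R3[of 1] n1 c2 c3 by (simp add: numeral_2_eq_2 numeral_3_eq_3)
  have l1: "lk 1 = 0" using R2[of 0] lk0 nls0 by simp
  have l2: "lk 2 = 0" using R2[of 1] l1 n1 by (simp add: numeral_2_eq_2)
  have l3: "lk 3 = 1" using R2[of 2] l2 n2 by (simp add: numeral_3_eq_3 numeral_2_eq_2)
  have l4: "lk 4 = 6"
  proof -
    have "nls 3 = 5" using R3[of 2] n2 c3 c4 by (simp add: numeral_3_eq_3 numeral_2_eq_2 eval_nat_numeral)
    moreover have "lk (Suc 3) = lk 3 + nls 3" by (rule R2)
    ultimately show ?thesis using l3 by simp
  qed
  have i1: "ii 1 = 1" using R1[of 0] cc0 lk0 by simp
  have i2: "ii 2 = 2" using R1[of 1] cc1 l1 by (simp add: numeral_2_eq_2)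
  have i3: "ii 3 = 6" using R1[of 2] c2 l2 by (simp add: numeral_3_eq_3)
  have i4: "ii 4 = 21" using R1[of 3] c3 l3 by (simp add: eval_nat_numeral)
  have i5: "ii 5 = 76" using R1[of 4] c4 l4 by (simp add: eval_nat_numeral)
  have "I_count 0 = 1" "I_count 1 = 1" "I_count 2 = 2" "I_count 3 = 6" "I_count 4 = 21" "I_count 5 = 76"
    using ii0 i1 i2 i3 i4 i5 unfolding ii_def by simp_all
  thus ?thesis by (simp add: upt_rec eval_nat_numeral)
qed

theorem mainTheorem5:
  fixes S :: "real fps"
  assumes "fps_nth S 0 = 1" and "S ^ 2 = 1 - 4 * fps_X"
  shows "Abs_fps (\<lambda>n. real (I_count n)) =
           ((1 - 4 * fps_X) * (1 - 2 * fps_X) * (3 - 2 * fps_X)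
             - (1 - 8 * fps_X + 12 * fps_X ^ 2 - 2 * fps_X ^ 3) * S)
           / (2 * (1 - fps_X) ^ 2 * (1 - 4 * fps_X))
       \<and> map I_count [0..<6] = [1, 1, 2, 6, 21, 76]"
proof
  define D :: "real fps" where "D = 2 * (1 - fps_X) ^ 2 * (1 - 4 * fps_X)"
  have D0: "fps_nth D 0 \<noteq> 0" unfolding D_def by simp
  have e: "Abs_fps (\<lambda>n. real (I_count n)) = IIf" unfolding IIf_def ii_def ..
  have "((1 - 4 * fps_X) * (1 - 2 * fps_X) * (3 - 2 * fps_X)
             - (1 - 8 * fps_X + 12 * fps_X ^ 2 - 2 * fps_X ^ 3) * S) / D
       = (IIf * D) / D" using main_id[OF assms] unfolding D_def by simp
  also have "\<dots> = IIf * D * inverse D" using D0 by (rule fps_divide_unit)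
  also have "\<dots> = IIf" using inverse_mult_eq_1'[OF D0] by (simp add: mult.assoc)
  finally show "Abs_fps (\<lambda>n. real (I_count n)) =
           ((1 - 4 * fps_X) * (1 - 2 * fps_X) * (3 - 2 * fps_X)
             - (1 - 8 * fps_X + 12 * fps_X ^ 2 - 2 * fps_X ^ 3) * S)
           / (2 * (1 - fps_X) ^ 2 * (1 - 4 * fps_X))" using e unfolding D_def by simp
next
  show "map I_count [0..<6] = [1, 1, 2, 6, 21, 76]" by (rule vals)
qed

end
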